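(* Let $R$ be a finite group and let $\varphi$ be an automorphism of $R$ with $|R:C_R(\varphi)|=3$. Then one of the following holds: (1) $\frac14\left(|R|+|\mathbf{I}(R)|+|C_R(\varphi)|+|C_R(\varphi)^{-1}|\right)\le \mathbf{c}(R)-\frac{|R|}{96}$; (2) $R$ is abelian of exponent greater than $2$ and $\varphi=\iota$.
   Context: $\mathbf{I}(R)=\{x\in R\mid x^2=1\}$, $\mathbf{c}(R)=(|R|+|\mathbf{I}(R)|)/2$. For an automorphism $\varphi$: $C_R(\varphi)=\{x\in R\mid x^\varphi=x\}$ and $C_R(\varphi)^{-1}=\{x\in R\mid x^\varphi=x^{-1}\}$. $\iota:R\to R$ is the map $x\mapsto x^{-1}$. *)

theory Defs
  imports "HOL-Algebra.Algebra"
begin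

definition invols :: "('a, 'b) monoid_scheme \<Rightarrow> 'a set" where
  "invols G = {x \<in> carrier G. x \<otimes>\<^bsub>G\<^esub> x = \<one>\<^bsub>G\<^esub>}"

definition cR :: "('a, 'b) monoid_scheme \<Rightarrow> real" where
  "cR G = (real (card (carrier G)) + real (card (invols G))) / 2"

definition fixC :: "('a, 'b) monoid_scheme \<Rightarrow> ('a \<Rightarrow> 'a) \<Rightarrow> 'a set" where
  "fixC G \<phi> = {x \<in> carrier G. \<phi> x = x}"

definition invC :: "('a, 'b) monoid_scheme \<Rightarrow> ('a \<Rightarrow> 'a) \<Rightarrow> 'a set" where
  "invC G \<phi> = {x \<in> carrier G. \<phi> x = inv\<^bsub>G\<^esub> x}"

definition group_exponent :: "('a, 'b) monoid_scheme \<Rightarrow> nat" where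
  "group_exponent G = Lcm (group.ord G ` carrier G)"

end

theory Submission
  imports Defs
begin

context group begin

lemma cx1 [simp]: "\<lbrakk>x \<in> carrier G; z \<in> carrier G\<rbrakk> \<Longrightarrow> x \<otimes> (inv x \<otimes> z) = z"
  by (simp flip: m_assoc)
lemma cx2 [simp]: "\<lbrakk>x \<in> carrier G; z \<in> carrier G\<rbrakk> \<Longrightarrow> inv x \<otimes> (x \<otimes> z) = z"
  by (simp flip: m_assoc)

lemma half_sub:
  assumes fin: "finite K" and KG: "K \<subseteq> carrier G" and HK: "H \<subseteq> K"
    and Kc: "\<And>a b. a \<in> K \<Longrightarrow> b \<in> K \<Longrightarrow> a \<otimes> b \<in> K"
    and Hc: "\<And>a b. a \<in> H \<Longrightarrow> b \<in> H \<Longrightarrow> a \<otimes> b \<in> H"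
    and Hi: "\<And>a. a \<in> H \<Longrightarrow> inv a \<in> H"
    and cd: "card K < 2 * card H"
  shows "H = K"
proof (rule ccontr)
  assume "H \<noteq> K"
  then obtain g where g: "g \<in> K" "g \<notin> H" using HK by blast
  have gc: "g \<in> carrier G" using g KG by auto
  have sub: "(\<lambda>h. g \<otimes> h) ` H \<subseteq> K - H"
  proof
    fix x assume "x \<in> (\<lambda>h. g \<otimes> h) ` H"
    then obtain h where h: "h \<in> H" "x = g \<otimes> h" by auto
    have hc: "h \<in> carrier G" using h HK KG by auto
    have "x \<in> K" using h Kc g HK by auto
    moreover have "x \<notin> H"
    proof
      assume "x \<in> H"
      then have "x \<otimes> inv h \<in> H" using Hc Hi h by auto
      moreover have "x \<otimes> inv h = g" using h hc gc by (simp add: m_assoc)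
      ultimately show False using g by auto
    qed
    ultimately show "x \<in> K - H" by auto
  qed
  have inj: "inj_on (\<lambda>h. g \<otimes> h) H"
    by (rule inj_onI) (meson HK KG gc l_cancel subsetD)
  have "card H = card ((\<lambda>h. g \<otimes> h) ` H)" using inj card_image by fastforce
  also have "\<dots> \<le> card (K - H)" using sub fin by (intro card_mono) auto
  also have "\<dots> = card K - card H" using fin HK by (simp add: card_Diff_subset finite_subset)
  finally show False using cd by linarith
qed

lemma core:
  assumes fin: "finite C" and CG: "C \<subseteq> carrier G"
    and Cm: "\<And>a b. a \<in> C \<Longrightarrow> b \<in> C \<Longrightarrow> a \<otimes> b \<in> C"
    and Ci: "\<And>a. a \<in> C \<Longrightarrow> inv a \<in> C"
    and g: "g \<in> carrier G"
    and T: "T = {c \<in> C. inv g \<otimes> c \<otimes> g = inv c}"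
    and cd: "7 * card C < 8 * card T"
  shows "T = C"
proof -
  have TC: "T \<subseteq> C" using T by auto
  have Tc: "t \<in> T \<Longrightarrow> t \<in> carrier G" for t using TC CG by auto
  have comm1: "t \<otimes> s = s \<otimes> t" if t: "t \<in> T" and s: "s \<in> T" and ts: "t \<otimes> s \<in> T" for t s
  proof -
    have tc: "t \<in> carrier G" and sc: "s \<in> carrier G" using t s Tc by auto
    have "inv g \<otimes> (t \<otimes> s) \<otimes> g = (inv g \<otimes> t \<otimes> g) \<otimes> (inv g \<otimes> s \<otimes> g)"
      using tc sc g by (simp add: m_assoc)
    also have "\<dots> = inv t \<otimes> inv s" using t s T by auto
    finally have "inv (t \<otimes> s) = inv t \<otimes> inv s" using ts T by auto
    then have "inv s \<otimes> inv t = inv t \<otimes> inv s" using tc sc by (simp add: inv_mult_group)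
    then have "inv (inv s \<otimes> inv t) = inv (inv t \<otimes> inv s)" by simp
    then show ?thesis using tc sc by (simp add: inv_mult_group)
  qed
  have central: "t \<otimes> s = s \<otimes> t" if t: "t \<in> T" and s: "s \<in> C" for t s
  proof -
    have tc: "t \<in> carrier G" using t Tc by auto
    define Z where "Z = {s \<in> C. t \<otimes> s = s \<otimes> t}"
    define B where "B = (\<lambda>u. inv t \<otimes> u) ` T"
    have tC: "t \<in> C" using t TC by auto
    have BC: "B \<subseteq> C" unfolding B_def using TC Ci tC Cm by blast
    have cardB: "card B = card T"
      unfolding B_def by (rule card_image, rule inj_onI) (use tc Tc in \<open>auto\<close>)
    have "T \<inter> B \<subseteq> Z"
    proof
      fix s assume s: "s \<in> T \<inter> B"
      then obtain u where u: "u \<in> T" "s = inv t \<otimes> u" unfolding B_def by auto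
      have "t \<otimes> s = u" using u tc Tc by simp
      then have "t \<otimes> s \<in> T" using u by simp
      then show "s \<in> Z" unfolding Z_def using comm1[OF t _] s TC by auto
    qed
    then have c1: "card (T \<inter> B) \<le> card Z" unfolding Z_def using fin by (intro card_mono) auto
    have "card (T \<union> B) \<le> card C" using TC BC fin by (intro card_mono) auto
    moreover have "card (T \<union> B) + card (T \<inter> B) = card T + card B"
      using card_Un_Int[of T B] finite_subset[OF TC fin] finite_subset[OF BC fin] by linarith
    ultimately have "2 * card C < 4 * card Z" using cardB cd c1 by linarith
    then have "card C < 2 * card Z" by linarith
    have "Z = C"
    proof (rule half_sub[OF fin CG])
      show "Z \<subseteq> C" unfolding Z_def by auto
      show "a \<otimes> b \<in> C" if "a \<in> C" "b \<in> C" for a b using Cm that by auto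
      show "a \<otimes> b \<in> Z" if "a \<in> Z" "b \<in> Z" for a b
      proof -
        have a: "a \<in> C" "t \<otimes> a = a \<otimes> t" and b: "b \<in> C" "t \<otimes> b = b \<otimes> t"
          using that unfolding Z_def by auto
        have ac: "a \<in> carrier G" and bc: "b \<in> carrier G" using a b CG by auto
        have "t \<otimes> (a \<otimes> b) = (t \<otimes> a) \<otimes> b" using ac bc tc by (simp add: m_assoc)
        also have "\<dots> = a \<otimes> (t \<otimes> b)" using a ac bc tc by (simp add: m_assoc)
        also have "\<dots> = (a \<otimes> b) \<otimes> t" using b ac bc tc by (simp add: m_assoc)
        finally show ?thesis using a b Cm unfolding Z_def by auto
      qed
      show "inv a \<in> Z" if "a \<in> Z" for a
      proof -
        have a: "a \<in> C" "t \<otimes> a = a \<otimes> t" using that unfolding Z_def by auto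
        have ac: "a \<in> carrier G" using a CG by auto
        have "inv (t \<otimes> a) = inv (a \<otimes> t)" using a by simp
        then have "inv a \<otimes> inv t = inv t \<otimes> inv a" using ac tc by (simp add: inv_mult_group)
        then have "t \<otimes> (inv a \<otimes> inv t) \<otimes> t = t \<otimes> (inv t \<otimes> inv a) \<otimes> t" by simp
        then have "t \<otimes> inv a = inv a \<otimes> t" using ac tc by (simp add: m_assoc)
        then show ?thesis using a Ci unfolding Z_def by auto
      qed
      show "card C < 2 * card Z" by fact
    qed
    then show ?thesis using s unfolding Z_def by auto
  qed
  show ?thesis
  proof (rule half_sub[OF fin CG TC Cm])
    show "a \<otimes> b \<in> T" if a: "a \<in> T" and b: "b \<in> T" for a b
    proof -
      have ac: "a \<in> carrier G" and bc: "b \<in> carrier G" using a b Tc by auto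
      have "inv g \<otimes> (a \<otimes> b) \<otimes> g = (inv g \<otimes> a \<otimes> g) \<otimes> (inv g \<otimes> b \<otimes> g)"
        using ac bc g by (simp add: m_assoc)
      also have "\<dots> = inv a \<otimes> inv b" using a b T by auto
      also have "\<dots> = inv (b \<otimes> a)" using ac bc by (simp add: inv_mult_group)
      also have "\<dots> = inv (a \<otimes> b)" using central[OF a] b TC by auto
      finally show ?thesis using a b T Cm by auto
    qed
    show "inv a \<in> T" if a: "a \<in> T" for a
    proof -
      have ac: "a \<in> carrier G" using a Tc by auto
      have "inv g \<otimes> inv a \<otimes> g = inv (inv g \<otimes> a \<otimes> g)" using ac g by (simp add: m_assoc inv_mult_group)
      also have "\<dots> = inv (inv a)" using a T by auto
      finally show ?thesis using a T Ci by auto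
    qed
    show "card C < 2 * card T" using cd by linarith
  qed
qed

end

lemma (in group) main_lemma:
  assumes "finite (carrier G)"
    and "\<phi> \<in> iso G G"
    and "card (carrier G) = 3 * card (fixC G \<phi>)"
  shows "(real (card (carrier G)) + real (card (invols G)) + real (card (fixC G \<phi>))
            + real (card (invC G \<phi>))) / 4 \<le> cR G - real (card (carrier G)) / 96
         \<or> (comm_group G \<and> group_exponent G > 2 \<and> (\<forall>x \<in> carrier G. \<phi> x = inv x))"
proof -
  let ?C = "fixC G \<phi>" and ?V = "invC G \<phi>" and ?I = "invols G"
  have fin: "finite (carrier G)" by fact
  have hom: "\<phi> \<in> hom G G" using assms(2) by (simp add: iso_imp_homomorphism)
  have gh: "group_hom G G \<phi>" using hom is_group by (simp add: group_hom_def group_hom_axioms_def)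
  have pm: "\<phi> (x \<otimes> y) = \<phi> x \<otimes> \<phi> y" if "x \<in> carrier G" "y \<in> carrier G" for x y
    using hom that by (simp add: hom_mult)
  have pc: "\<phi> x \<in> carrier G" if "x \<in> carrier G" for x using hom that by (simp add: hom_in_carrier)
  have pi: "\<phi> (inv x) = inv (\<phi> x)" if "x \<in> carrier G" for x using group_hom.hom_inv[OF gh that] .
  have p1: "\<phi> \<one> = \<one>" using group_hom.hom_one[OF gh] .
  have CG: "?C \<subseteq> carrier G" unfolding fixC_def by auto
  have finC: "finite ?C" using CG fin finite_subset by auto
  have Cm: "a \<otimes> b \<in> ?C" if "a \<in> ?C" "b \<in> ?C" for a b using that pm unfolding fixC_def by auto
  have Ci: "inv a \<in> ?C" if "a \<in> ?C" for a using that pi unfolding fixC_def by auto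
  have C1: "\<one> \<in> ?C" using p1 unfolding fixC_def by auto
  have Vchar: "g \<otimes> c \<in> ?V \<longleftrightarrow> inv g \<otimes> c \<otimes> g = inv c" if g: "g \<in> ?V" and c: "c \<in> ?C" for g c
  proof -
    have gc: "g \<in> carrier G" "\<phi> g = inv g" using g unfolding invC_def by auto
    have cc: "c \<in> carrier G" "\<phi> c = c" using c unfolding fixC_def by auto
    have "g \<otimes> c \<in> ?V \<longleftrightarrow> inv g \<otimes> c = inv c \<otimes> inv g"
      unfolding invC_def using gc cc pm by (auto simp: inv_mult_group)
    also have "\<dots> \<longleftrightarrow> inv g \<otimes> c \<otimes> g = inv c"
    proof
      assume "inv g \<otimes> c = inv c \<otimes> inv g"
      then have "inv g \<otimes> c \<otimes> g = inv c \<otimes> inv g \<otimes> g" by simp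
      then show "inv g \<otimes> c \<otimes> g = inv c" using gc cc by (simp add: m_assoc)
    next
      assume "inv g \<otimes> c \<otimes> g = inv c"
      then have "inv g \<otimes> c \<otimes> g \<otimes> inv g = inv c \<otimes> inv g" by simp
      then show "inv g \<otimes> c = inv c \<otimes> inv g" using gc cc by (simp add: m_assoc)
    qed
    finally show ?thesis .
  qed
  define n where "n = card (carrier G)"
  define f where "f = card ?C"
  have nf: "n = 3 * f" using assms(3) unfolding n_def f_def .
  have f1: "f \<ge> 1" unfolding f_def using finC C1 by (metis One_nat_def Suc_leI card_gt_0_iff empty_iff)
  define S where "S g = (\<lambda>c. g \<otimes> c) ` ?C" for g
  have cardS: "card (S g) = f" if "g \<in> carrier G" for g
    unfolding S_def f_def by (rule card_image, rule inj_onI) (meson that CG l_cancel subsetD)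
  have SG: "S g \<subseteq> carrier G" if "g \<in> carrier G" for g using that CG unfolding S_def by auto
  have SC: "S g \<inter> ?C = {}" if "g \<in> carrier G" "g \<notin> ?C" for g
  proof -
    { fix c assume c: "c \<in> ?C" "g \<otimes> c \<in> ?C"
      then have "g \<otimes> c \<otimes> inv c \<in> ?C" using Cm Ci by auto
      moreover have "g \<otimes> c \<otimes> inv c = g" using c CG that by (auto simp: m_assoc)
      ultimately have False using that by auto }
    then show ?thesis unfolding S_def by auto
  qed
  have cardRest: "card (carrier G - ?C - S g) = f" if "g \<in> carrier G" "g \<notin> ?C" for g
  proof -
    have "card (carrier G - ?C) = n - f" unfolding n_def f_def using CG fin by (simp add: card_Diff_subset finC)
    moreover have "S g \<subseteq> carrier G - ?C" using SG SC that by auto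
    moreover have "finite (S g)" using SG[OF that(1)] fin finite_subset by blast
    ultimately have "card (carrier G - ?C - S g) = (n - f) - f"
      using cardS[OF that(1)] card_Diff_subset[of "S g" "carrier G - ?C"] by simp
    then show ?thesis using nf by simp
  qed
  show ?thesis
  proof (rule ccontr)
    assume neg: "\<not> ?thesis"
    then have "\<not> ((real (card (carrier G)) + real (card ?I) + real (card ?C)
            + real (card ?V)) / 4 \<le> cR G - real (card (carrier G)) / 96)" by blast
    then have "24 * real (card ?V) > 15 * real n + 24 * real (card ?I)"
      unfolding cR_def n_def using assms(3) by (simp add: field_simps)
    then have ineq: "24 * card ?V > 15 * n + 24 * card ?I" by linarith
    define W where "W = ?V - ?C"
    have VCI: "?V \<inter> ?C \<subseteq> ?I"
    proof
      fix x assume x: "x \<in> ?V \<inter> ?C"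
      then have "x = inv x" "x \<in> carrier G" unfolding invC_def fixC_def by auto
      then have "x \<otimes> x = \<one>" by (metis r_inv)
      then show "x \<in> ?I" using x unfolding invols_def invC_def by auto
    qed
    have finV: "finite ?V" using fin unfolding invC_def by auto
    have finI: "finite ?I" using fin unfolding invols_def by auto
    have "card W = card ?V - card (?V \<inter> ?C)" unfolding W_def using finV by (simp add: card_Diff_subset_Int)
    moreover have "card (?V \<inter> ?C) \<le> card ?I" using VCI finI card_mono by blast
    moreover have "card (?V \<inter> ?C) \<le> card ?V" using finV card_mono by blast
    ultimately have W: "8 * card W > 15 * f" using ineq nf by linarith
    have WG: "W \<subseteq> carrier G - ?C" unfolding W_def invC_def by auto
    have allV: "g \<in> ?V" if g: "g \<in> carrier G" "g \<notin> ?C" for g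
    proof -
      have "W \<subseteq> (?V \<inter> S g) \<union> (carrier G - ?C - S g)" using WG unfolding W_def by auto
      then have "card W \<le> card ((?V \<inter> S g) \<union> (carrier G - ?C - S g))"
        using fin finV by (intro card_mono) auto
      also have "\<dots> \<le> card (?V \<inter> S g) + card (carrier G - ?C - S g)" by (rule card_Un_le)
      finally have big: "7 * f < 8 * card (?V \<inter> S g)" using cardRest[OF g] W by linarith
      then have "?V \<inter> S g \<noteq> {}" by auto
      then obtain d where d: "d \<in> ?C" "g \<otimes> d \<in> ?V" unfolding S_def by auto
      define g' where "g' = g \<otimes> d"
      have dc: "d \<in> carrier G" using d CG by auto
      have g'c: "g' \<in> carrier G" using g dc g'_def by auto
      define T where "T = {c \<in> ?C. inv g' \<otimes> c \<otimes> g' = inv c}"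
      have T': "T = {c \<in> ?C. g' \<otimes> c \<in> ?V}" unfolding T_def using Vchar d g'_def by auto
      have "(\<lambda>c. g' \<otimes> c) ` T = ?V \<inter> S g"
      proof
        show "(\<lambda>c. g' \<otimes> c) ` T \<subseteq> ?V \<inter> S g"
        proof
          fix x assume "x \<in> (\<lambda>c. g' \<otimes> c) ` T"
          then obtain c where c: "c \<in> ?C" "g' \<otimes> c \<in> ?V" "x = g' \<otimes> c" unfolding T' by auto
          have "x = g \<otimes> (d \<otimes> c)" using c g dc CG g'_def by (auto simp: m_assoc)
          then show "x \<in> ?V \<inter> S g" using c d Cm unfolding S_def by auto
        qed
        show "?V \<inter> S g \<subseteq> (\<lambda>c. g' \<otimes> c) ` T"
        proof
          fix x assume "x \<in> ?V \<inter> S g"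
          then obtain e where e: "e \<in> ?C" "x = g \<otimes> e" "x \<in> ?V" unfolding S_def by auto
          have ec: "e \<in> carrier G" using e CG by auto
          have "x = g' \<otimes> (inv d \<otimes> e)" using e g dc ec g'_def by (simp add: m_assoc)
          moreover have "inv d \<otimes> e \<in> ?C" using Ci Cm d e by auto
          ultimately show "x \<in> (\<lambda>c. g' \<otimes> c) ` T" unfolding T' using e by auto
        qed
      qed
      moreover have "card ((\<lambda>c. g' \<otimes> c) ` T) = card T"
        by (rule card_image, rule inj_onI) (metis (no_types, lifting) T_def g'c CG l_cancel subsetD mem_Collect_eq)
      ultimately have "7 * card ?C < 8 * card T" using big f_def by simp
      then have "T = ?C" using core[OF finC CG Cm Ci g'c T_def] by blast
      then have "g' \<otimes> inv d \<in> ?V" unfolding T' using Ci d by blast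
      moreover have "g' \<otimes> inv d = g" using g dc g'_def by (simp add: m_assoc)
      ultimately show ?thesis by simp
    qed
    have conj: "inv g \<otimes> c \<otimes> g = inv c" if g: "g \<in> carrier G" "g \<notin> ?C" and c: "c \<in> ?C" for g c
    proof -
      have cc: "c \<in> carrier G" using c CG by auto
      have "g \<otimes> c \<notin> ?C"
      proof
        assume "g \<otimes> c \<in> ?C"
        then have "g \<otimes> c \<otimes> inv c \<in> ?C" using Cm Ci c by auto
        then show False using g cc by (simp add: m_assoc)
      qed
      then have "g \<otimes> c \<in> ?V" using allV g cc by auto
      then show ?thesis using Vchar allV[OF g] c by auto
    qed
    have "\<exists>g h. g \<in> carrier G \<and> g \<notin> ?C \<and> h \<in> carrier G \<and> h \<notin> ?C \<and> g \<otimes> h \<notin> ?C"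
    proof -
      have "card ?C < card (carrier G)" using nf f1 n_def f_def by linarith
      then have "\<not> carrier G \<subseteq> ?C" using card_mono[OF finC, of "carrier G"] by linarith
      then obtain x where x: "x \<in> carrier G" "x \<notin> ?C" by blast
      show ?thesis
      proof (cases "x \<otimes> x \<in> ?C")
        case False then show ?thesis using x by blast
      next
        case True
        have "card (carrier G - ?C - S x) > 0" using cardRest[OF x] f1 by linarith
        then obtain y where y: "y \<in> carrier G" "y \<notin> ?C" "y \<notin> S x" by (metis card_gt_0_iff DiffE ex_in_conv)
        have "x \<otimes> y \<notin> ?C"
        proof
          assume "x \<otimes> y \<in> ?C"
          then have "inv (x \<otimes> x) \<otimes> (x \<otimes> y) \<in> ?C" using True Ci Cm by auto
          then have "x \<otimes> (inv (x \<otimes> x) \<otimes> (x \<otimes> y)) \<in> S x" unfolding S_def by auto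
          moreover have "x \<otimes> (inv (x \<otimes> x) \<otimes> (x \<otimes> y)) = y" using x y by (simp add: m_assoc inv_mult_group)
          ultimately show False using y by auto
        qed
        then show ?thesis using x y by blast
      qed
    qed
    then obtain g h where gh': "g \<in> carrier G" "g \<notin> ?C" "h \<in> carrier G" "h \<notin> ?C" "g \<otimes> h \<notin> ?C" by blast
    have Cinv: "c = inv c" if c: "c \<in> ?C" for c
    proof -
      have cc: "c \<in> carrier G" using c CG by auto
      have "inv (g \<otimes> h) \<otimes> c \<otimes> (g \<otimes> h) = inv h \<otimes> (inv g \<otimes> c \<otimes> g) \<otimes> h"
        using gh' cc by (simp add: m_assoc inv_mult_group)
      also have "\<dots> = inv h \<otimes> inv c \<otimes> h" using conj gh' c by simp
      also have "\<dots> = inv (inv h \<otimes> c \<otimes> h)" using gh' cc by (simp add: m_assoc inv_mult_group)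
      also have "\<dots> = c" using conj gh' c cc by simp
      finally show ?thesis using conj[of "g \<otimes> h" c] gh' c by simp
    qed
    have Vall: "\<phi> x = inv x" if x: "x \<in> carrier G" for x
    proof (cases "x \<in> ?C")
      case True
      have "\<phi> x = x" using True unfolding fixC_def by auto
      then show ?thesis using Cinv[OF True] by metis
    next
      case False then show ?thesis using allV x unfolding invC_def by auto
    qed
    have comm: "comm_group G"
    proof (rule group_comm_groupI)
      fix x y assume xy: "x \<in> carrier G" "y \<in> carrier G"
      have "\<phi> (inv x \<otimes> inv y) = \<phi> (inv x) \<otimes> \<phi> (inv y)" using pm xy by simp
      then have "inv (inv x \<otimes> inv y) = x \<otimes> y" using Vall xy by simp
      then show "x \<otimes> y = y \<otimes> x" using xy by (simp add: inv_mult_group)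
    qed
    have "card ?C < card (carrier G)" using nf f1 n_def f_def by linarith
    then have "\<not> carrier G \<subseteq> ?C" using card_mono[OF finC, of "carrier G"] by linarith
      then obtain x where x: "x \<in> carrier G" "x \<notin> ?C" by blast
    have xx: "x \<noteq> inv x" using x Vall unfolding fixC_def by auto
    have o0: "ord x \<noteq> 0"
      using ord_dvd_group_order[OF x(1)] fin order_gt_0_iff_finite by (metis dvd_0_left_iff less_irrefl)
    have o1: "ord x \<noteq> 1" using ord_eq_1 x C1 by auto
    have o2: "ord x \<noteq> 2"
    proof
      assume "ord x = 2"
      then have "x [^] (2::nat) = \<one>" using pow_ord_eq_1[OF x(1)] by simp
      then have "x \<otimes> x = \<one>" using x by (simp add: numeral_2_eq_2 nat_pow_Suc)
      then show False using xx x by (metis inv_equality)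
    qed
    have "ord x dvd group_exponent G" unfolding group_exponent_def using x by auto
    moreover have "group_exponent G \<noteq> 0" unfolding group_exponent_def
    proof -
      have "ord y \<noteq> 0" if y: "y \<in> carrier G" for y
        using ord_dvd_group_order[OF y] fin order_gt_0_iff_finite by (metis dvd_0_left_iff less_irrefl)
      then have "0 \<notin> ord ` carrier G" by force
      then show "Lcm (ord ` carrier G) \<noteq> 0" using fin Lcm_0_iff_nat by simp
    qed
    ultimately have "ord x \<le> group_exponent G" by (simp add: dvd_imp_le)
    moreover have "ord x \<ge> 3" using o0 o1 o2 by linarith
    ultimately have "group_exponent G > 2" by linarith
    then show False using neg comm Vall by blast
  qed
qed


theorem lemma2p3:
  fixes R :: "('a, 'b) monoid_scheme" and \<phi> :: "'a \<Rightarrow> 'a"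
  assumes "group R" and "finite (carrier R)"
    and "\<phi> \<in> iso R R"
    and "card (carrier R) = 3 * card (fixC R \<phi>)"
  shows "(real (card (carrier R)) + real (card (invols R)) + real (card (fixC R \<phi>))
            + real (card (invC R \<phi>))) / 4 \<le> cR R - real (card (carrier R)) / 96
         \<or> (comm_group R \<and> group_exponent R > 2 \<and> (\<forall>x \<in> carrier R. \<phi> x = inv\<^bsub>R\<^esub> x))"
  using group.main_lemma[OF assms] .

end
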